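(* Let $n\geq 2$, let $F_n$ be the free group with free basis $x_1,\dots,x_n$, let $\varphi\in\mathrm{Aut}(F_n)$, and let $G_\varphi=F_n\rtimes\langle t\rangle$ be the semidirect product with an infinite cyclic group $\langle t\rangle$ in which conjugation by $t$ induces $\varphi$ on $F_n$. Let $A\in\mathrm{GL}_n(\mathbb{Z})$ be the matrix of the automorphism of $F_n/F_n'\cong\mathbb{Z}^n$ induced by $\varphi$, and let $E$ be the $n\times n$ identity matrix. If $A-E\in\mathrm{GL}_n(\mathbb{Z})$, then $\bigcap_{i=1}^{\infty}\gamma_i(G_\varphi)=F_n$, and in particular $G_\varphi$ is not residually nilpotent.
   Context: $\gamma_i(G)$ denotes the $i$-th term of the lower central series of $G$: $\gamma_1(G)=G$, $\gamma_{i+1}(G)=[\gamma_i(G),G]$. $F_n'$ is the commutator subgroup of $F_n$. A group is residually nilpotent if the intersection of its lower central series is trivial. *)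

theory Defs
  imports "HOL-Algebra.Algebra" "Jordan_Normal_Form.Matrix"
begin

text \<open>Words over the letters x_i (True) and x_i^-1 (False).\<close>

fun reduced_word :: "(nat \<times> bool) list \<Rightarrow> bool" where
  "reduced_word [] = True"
| "reduced_word [a] = True"
| "reduced_word (a # b # w) = (\<not> (fst a = fst b \<and> snd a \<noteq> snd b) \<and> reduced_word (b # w))"

definition word_eval :: "('a, 'b) monoid_scheme \<Rightarrow> (nat \<Rightarrow> 'a) \<Rightarrow> (nat \<times> bool) list \<Rightarrow> 'a" where
  "word_eval G x w = foldr (\<lambda>(i, e) acc. (if e then x i else inv\<^bsub>G\<^esub> (x i)) \<otimes>\<^bsub>G\<^esub> acc) w \<one>\<^bsub>G\<^esub>"

definition free_basis :: "('a, 'b) monoid_scheme \<Rightarrow> 'a set \<Rightarrow> nat \<Rightarrow> (nat \<Rightarrow> 'a) \<Rightarrow> bool" where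
  "free_basis G F n x \<longleftrightarrow>
     subgroup F G \<and> (\<forall>i<n. x i \<in> F) \<and> inj_on x {..<n} \<and>
     F = generate G (x ` {..<n}) \<and>
     (\<forall>w. w \<noteq> [] \<and> reduced_word w \<and> (\<forall>l\<in>set w. fst l < n) \<longrightarrow> word_eval G x w \<noteq> \<one>\<^bsub>G\<^esub>)"

text \<open>Lower central series: lcs G 0 = gamma_1(G) = G, lcs G (Suc i) = [lcs G i, G].\<close>

fun lcs :: "('a, 'b) monoid_scheme \<Rightarrow> nat \<Rightarrow> 'a set" where
  "lcs G 0 = carrier G"
| "lcs G (Suc i) = generate G {a \<otimes>\<^bsub>G\<^esub> b \<otimes>\<^bsub>G\<^esub> inv\<^bsub>G\<^esub> a \<otimes>\<^bsub>G\<^esub> inv\<^bsub>G\<^esub> b | a b. a \<in> lcs G i \<and> b \<in> carrier G}"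

definition residually_nilpotent :: "('a, 'b) monoid_scheme \<Rightarrow> bool" where
  "residually_nilpotent G \<longleftrightarrow> (\<Inter>i. lcs G i) = {\<one>\<^bsub>G\<^esub>}"

definition basis_monomial :: "('a, 'b) monoid_scheme \<Rightarrow> nat \<Rightarrow> (nat \<Rightarrow> 'a) \<Rightarrow> (nat \<Rightarrow> int) \<Rightarrow> 'a" where
  "basis_monomial G n x a = foldr (\<lambda>i acc. (x i [^]\<^bsub>G\<^esub> a i) \<otimes>\<^bsub>G\<^esub> acc) [0..<n] \<one>\<^bsub>G\<^esub>"

text \<open>A is the matrix of the automorphism of F/F' = Z^n induced by phi, w.r.t. the
  images of the basis: column j records phi(x_j) modulo F'.\<close>

definition abelianization_matrix :: "('a, 'b) monoid_scheme \<Rightarrow> 'a set \<Rightarrow> nat \<Rightarrow> (nat \<Rightarrow> 'a) \<Rightarrow> ('a \<Rightarrow> 'a) \<Rightarrow> int mat \<Rightarrow> bool" where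
  "abelianization_matrix G F n x \<phi> A \<longleftrightarrow> A \<in> carrier_mat n n \<and>
     (\<forall>j<n. \<phi> (x j) \<otimes>\<^bsub>G\<^esub> inv\<^bsub>G\<^esub> (basis_monomial G n x (\<lambda>i. A $$ (i, j))) \<in> derived G F)"

end

theory Submission
  imports Defs
begin

lemma (in comm_group) finprod_int_pow:
  assumes "finite A" "f \<in> A \<rightarrow> carrier G"
  shows "(finprod G f A) [^] (c::int) = finprod G (\<lambda>i. f i [^] c) A"
  using assms
proof (induction A rule: finite_induct)
  case empty then show ?case by simp
next
  case (insert a A)
  then show ?case by (simp add: int_pow_distrib Pi_def)
qed

lemma (in comm_group) key_lin:
  fixes y :: "nat \<Rightarrow> 'a" and A B :: "nat \<Rightarrow> nat \<Rightarrow> int"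
  assumes y: "\<And>i. i < n \<Longrightarrow> y i \<in> carrier G"
    and hA: "\<And>j. j < n \<Longrightarrow> finprod G (\<lambda>i. y i [^] A i j) {..<n} = y j"
    and hB: "\<And>i k. i < n \<Longrightarrow> k < n \<Longrightarrow>
               (\<Sum>j<n. (A i j - (if i = j then 1 else 0)) * B j k) = (if i = k then 1 else 0)"
    and k: "k < n"
  shows "y k = \<one>"
proof -
  define P where "P v = finprod G (\<lambda>i. y i [^] (v i::int)) {..<n}" for v
  have Pc: "P v \<in> carrier G" for v unfolding P_def using y by (auto intro!: finprod_closed)
  have Padd: "P (\<lambda>i. v i + w i) = P v \<otimes> P w" for v w
  proof -
    have "P (\<lambda>i. v i + w i) = finprod G (\<lambda>i. y i [^] v i \<otimes> y i [^] w i) {..<n}"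
      unfolding P_def by (rule finprod_cong') (auto simp: int_pow_mult y)
    also have "\<dots> = P v \<otimes> P w" unfolding P_def by (rule finprod_multf) (auto simp: y)
    finally show ?thesis .
  qed
  have Pmul: "P (\<lambda>i. c * v i) = P v [^] c" for v c
  proof -
    have "P v [^] c = finprod G (\<lambda>i. (y i [^] v i) [^] c) {..<n}"
      unfolding P_def by (rule finprod_int_pow) (auto simp: y)
    also have "\<dots> = P (\<lambda>i. c * v i)"
      unfolding P_def by (rule finprod_cong') (auto simp: int_pow_pow y mult.commute)
    finally show ?thesis by simp
  qed
  have Pdelta: "P (\<lambda>i. if i = j then 1 else 0) = y j" if "j < n" for j
  proof -
    have "P (\<lambda>i. if i = j then 1 else 0) = finprod G (\<lambda>i. if j = i then y i else \<one>) {..<n}"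
      unfolding P_def by (rule finprod_cong') (auto simp: y)
    also have "\<dots> = y j" using that y by (intro finprod_singleton) auto
    finally show ?thesis .
  qed
  define M where "M i j = A i j - (if i = j then 1 else 0)" for i j
  have PM: "P (\<lambda>i. M i j) = \<one>" if "j < n" for j
  proof -
    have "y j = P (\<lambda>i. A i j)" using hA[OF that] unfolding P_def by simp
    also have "(\<lambda>i. A i j) = (\<lambda>i. M i j + (if i = j then 1 else 0))" unfolding M_def by auto
    also have "P \<dots> = P (\<lambda>i. M i j) \<otimes> y j" by (simp add: Padd Pdelta that)
    finally have "y j = P (\<lambda>i. M i j) \<otimes> y j" .
    then show ?thesis using Pc y that
      by (metis l_one r_cancel one_closed)
  qed
  have Psum: "J \<subseteq> {..<n} \<Longrightarrow> P (\<lambda>i. \<Sum>j\<in>J. M i j * B j k) = \<one>" for J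
  proof (induction J rule: infinite_finite_induct)
    case (infinite A) then show ?case unfolding P_def by simp
  next
    case empty then show ?case unfolding P_def by simp
  next
    case (insert a J)
    have "P (\<lambda>i. \<Sum>j\<in>insert a J. M i j * B j k) = P (\<lambda>i. B a k * M i a + (\<Sum>j\<in>J. M i j * B j k))"
      using insert by (simp add: mult.commute)
    also have "\<dots> = P (\<lambda>i. M i a) [^] B a k \<otimes> \<one>"
      using insert by (simp add: Padd Pmul)
    also have "\<dots> = \<one>" using insert PM by simp
    finally show ?case .
  qed
  have "y k = P (\<lambda>i. if i = k then 1 else 0)" using Pdelta k by simp
  also have "\<dots> = P (\<lambda>i. \<Sum>j<n. M i j * B j k)"
    unfolding P_def by (rule finprod_cong') (use hB k in \<open>auto simp: M_def y\<close>)
  also have "\<dots> = \<one>" by (rule Psum) simp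
  finally show ?thesis .
qed

lemma inv_mat_entries:
  fixes A :: "int mat"
  assumes "invertible_mat (A - 1\<^sub>m n)" "A \<in> carrier_mat n n"
  shows "\<exists>B. \<forall>i<n. \<forall>k<n. (\<Sum>j<n. (A$$(i,j) - (if i=j then 1 else 0)) * B j k) = (if i=k then 1 else 0)"
proof -
  let ?M = "A - 1\<^sub>m n"
  have M: "?M \<in> carrier_mat n n" by (metis minus_carrier_mat one_carrier_mat)
  obtain B where B1: "?M * B = 1\<^sub>m (dim_row ?M)" and B2: "B * ?M = 1\<^sub>m (dim_row B)"
    using assms(1) unfolding invertible_mat_def inverts_mat_def by blast
  have rB: "dim_row B = n" using B2 M by (metis carrier_matD(2) index_mult_mat(3) index_one_mat(3))
  have cB: "dim_col B = n" using B1 M by (metis carrier_matD(1) index_mult_mat(3) index_one_mat(3))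
  show ?thesis
  proof (intro exI[of _ "\<lambda>j k. B $$ (j,k)"] allI impI)
    fix i k assume i: "i < n" and k: "k < n"
    have "(?M * B) $$ (i,k) = (if i = k then 1 else 0)" using B1 M i k by simp
    moreover have "(?M * B) $$ (i,k) = (\<Sum>j<n. (A$$(i,j) - (if i=j then 1 else 0)) * B $$ (j,k))"
      using M i k rB cB assms(2) by (auto simp: scalar_prod_def lessThan_atLeast0 intro!: sum.cong)
    ultimately show "(\<Sum>j<n. (A$$(i,j) - (if i=j then 1 else 0)) * B $$ (j,k)) = (if i=k then 1 else 0)" by simp
  qed
qed

lemma (in group) quot_comm:
  assumes "N \<lhd> G" "\<And>a b. a \<in> carrier G \<Longrightarrow> b \<in> carrier G \<Longrightarrow> a \<otimes> b \<otimes> inv a \<otimes> inv b \<in> N"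
  shows "comm_group (G Mod N)"
proof -
  interpret N: normal N G by fact
  show ?thesis
  proof (rule group.group_comm_groupI[OF N.factorgroup_is_group], simp add: FactGroup_def)
    fix U V assume "U \<in> rcosets N" "V \<in> rcosets N"
    then obtain a b where a: "a \<in> carrier G" "U = N #> a" and b: "b \<in> carrier G" "V = N #> b"
      unfolding RCOSETS_def by auto
    have e: "N #> (a \<otimes> b) = N #> (b \<otimes> a)"
    proof -
      have "(a \<otimes> b) \<otimes> inv (b \<otimes> a) \<in> N" using assms(2)[OF a(1) b(1)] a b
        by (simp add: inv_mult_group m_assoc)
      then have "a \<otimes> b \<in> N #> (b \<otimes> a)" using N.rcos_module_rev[OF is_group] a b by simp
      then show ?thesis using repr_independence[of "a \<otimes> b" N "b \<otimes> a"] a b N.subgroup_axioms by simp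
    qed
    show "U <#> V = V <#> U" using a b e by (simp add: N.rcos_sum)
  qed
qed

lemma foldr_hom_finprod:
  assumes G: "group G" and F: "subgroup F G" and K: "comm_group K"
    and h: "h \<in> hom (G\<lparr>carrier := F\<rparr>) K" and z: "\<And>i. i \<in> set xs \<Longrightarrow> z i \<in> F" and d: "distinct xs"
  shows "foldr (\<lambda>i acc. (z i [^]\<^bsub>G\<^esub> (a i::int)) \<otimes>\<^bsub>G\<^esub> acc) xs \<one>\<^bsub>G\<^esub> \<in> F \<and>
         h (foldr (\<lambda>i acc. (z i [^]\<^bsub>G\<^esub> a i) \<otimes>\<^bsub>G\<^esub> acc) xs \<one>\<^bsub>G\<^esub>) =
           finprod K (\<lambda>i. h (z i) [^]\<^bsub>K\<^esub> a i) (set xs)"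
  using z d
proof (induction xs)
  case Nil
  interpret KK: comm_group K by fact
  have gF: "group (G\<lparr>carrier := F\<rparr>)" using group.subgroup_imp_group[OF G F] .
  have gh: "group_hom (G\<lparr>carrier := F\<rparr>) K h"
    by (rule group_hom.intro[OF gF KK.group_axioms]) (simp add: group_hom_axioms_def h)
  have "h \<one>\<^bsub>G\<lparr>carrier := F\<rparr>\<^esub> = \<one>\<^bsub>K\<^esub>"
    using group_hom.hom_one[OF gh] .
  then show ?case using F by (simp add: subgroup.one_closed)
next
  case (Cons x xs)
  interpret KK: comm_group K by fact
  interpret GG: group G by fact
  have gF: "group (G\<lparr>carrier := F\<rparr>)" using group.subgroup_imp_group[OF G F] .
  let ?r = "foldr (\<lambda>i acc. (z i [^]\<^bsub>G\<^esub> a i) \<otimes>\<^bsub>G\<^esub> acc) xs \<one>\<^bsub>G\<^esub>"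
  have IH: "?r \<in> F" "h ?r = finprod K (\<lambda>i. h (z i) [^]\<^bsub>K\<^esub> a i) (set xs)" using Cons by auto
  have zx: "z x \<in> F" using Cons by auto
  have pw: "z x [^]\<^bsub>G\<^esub> a x = z x [^]\<^bsub>G\<lparr>carrier := F\<rparr>\<^esub> a x"
    using GG.int_pow_consistent[OF F zx] .
  have pwF: "z x [^]\<^bsub>G\<^esub> a x \<in> F" using pw group.int_pow_closed[OF gF, of "z x"] zx by simp
  have mem: "z x [^]\<^bsub>G\<^esub> a x \<otimes>\<^bsub>G\<^esub> ?r \<in> F" using pwF IH(1) F by (simp add: subgroup.m_closed)
  have hc: "\<And>u. u \<in> F \<Longrightarrow> h u \<in> carrier K" using h unfolding hom_def by auto
  have "h (z x [^]\<^bsub>G\<^esub> a x \<otimes>\<^bsub>G\<^esub> ?r) = h (z x [^]\<^bsub>G\<^esub> a x) \<otimes>\<^bsub>K\<^esub> h ?r"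
    using h pwF IH(1) unfolding hom_def by auto
  also have "h (z x [^]\<^bsub>G\<^esub> a x) = h (z x) [^]\<^bsub>K\<^esub> a x"
    using pw hom_int_pow[OF h _ gF KK.group_axioms, of "z x" "a x"] zx by simp
  finally have "h (z x [^]\<^bsub>G\<^esub> a x \<otimes>\<^bsub>G\<^esub> ?r) =
      h (z x) [^]\<^bsub>K\<^esub> a x \<otimes>\<^bsub>K\<^esub> finprod K (\<lambda>i. h (z i) [^]\<^bsub>K\<^esub> a i) (set xs)" using IH by simp
  also have "\<dots> = finprod K (\<lambda>i. h (z i) [^]\<^bsub>K\<^esub> a i) (set (x # xs))"
    using Cons.prems hc by (simp add: Pi_def)
  finally show ?case using mem by simp
qed

theorem proposition2p3:
  fixes G :: "('a, 'b) monoid_scheme" and F :: "'a set" and n :: nat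
    and x :: "nat \<Rightarrow> 'a" and \<phi> :: "'a \<Rightarrow> 'a" and t :: 'a and A :: "int mat"
  assumes "group G" and "n \<ge> 2"
    and "free_basis G F n x"
    and "\<phi> \<in> iso (G\<lparr>carrier := F\<rparr>) (G\<lparr>carrier := F\<rparr>)"
    and "F \<lhd> G"
    and "t \<in> carrier G"
    and "\<forall>k::int. k \<noteq> 0 \<longrightarrow> t [^]\<^bsub>G\<^esub> k \<noteq> \<one>\<^bsub>G\<^esub>"
    and "\<forall>k::int. t [^]\<^bsub>G\<^esub> k \<in> F \<longrightarrow> k = 0"
    and "carrier G = {f \<otimes>\<^bsub>G\<^esub> (t [^]\<^bsub>G\<^esub> (k::int)) | f k. f \<in> F}"
    and "\<forall>g\<in>F. t \<otimes>\<^bsub>G\<^esub> g \<otimes>\<^bsub>G\<^esub> inv\<^bsub>G\<^esub> t = \<phi> g"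
    and "abelianization_matrix G F n x \<phi> A"
    and "invertible_mat (A - 1\<^sub>m n)"
  shows "(\<Inter>i. lcs G i) = F \<and> \<not> residually_nilpotent G"
proof -
  note as = assms
  interpret G: group G by fact
  interpret Fn: normal F G by fact
  have Fsg: "subgroup F G" using Fn.subgroup_axioms .
  have Fcar: "F \<subseteq> carrier G" using Fn.subset .
  have fb: "subgroup F G" "\<forall>i<n. x i \<in> F" "F = generate G (x ` {..<n})"
    "\<forall>w. w \<noteq> [] \<and> reduced_word w \<and> (\<forall>l\<in>set w. fst l < n) \<longrightarrow> word_eval G x w \<noteq> \<one>\<^bsub>G\<^esub>"
    using as(3) unfolding free_basis_def by auto
  define FG where "FG = G\<lparr>carrier := F\<rparr>"
  have gFG: "group FG" unfolding FG_def using G.subgroup_imp_group[OF Fsg] .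
  have FGc [simp]: "carrier FG = F" "monoid.mult FG = monoid.mult G" "monoid.one FG = monoid.one G" unfolding FG_def by simp_all
  have FGinv [simp]: "inv\<^bsub>FG\<^esub> a = inv\<^bsub>G\<^esub> a" if "a \<in> F" for a
    unfolding FG_def using G.m_inv_consistent[OF Fsg that] .
  have comm_in_F: "a \<otimes>\<^bsub>G\<^esub> b \<otimes>\<^bsub>G\<^esub> inv\<^bsub>G\<^esub> a \<otimes>\<^bsub>G\<^esub> inv\<^bsub>G\<^esub> b \<in> F"
    if a: "a \<in> F" and b: "b \<in> carrier G" for a b
  proof -
    have ac: "a \<in> carrier G" using a Fcar by auto
    have "b \<otimes>\<^bsub>G\<^esub> inv\<^bsub>G\<^esub> a \<otimes>\<^bsub>G\<^esub> inv\<^bsub>G\<^esub> b \<in> F"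
      using Fn.inv_op_closed2[OF b Fn.m_inv_closed[OF a]] .
    then have "a \<otimes>\<^bsub>G\<^esub> (b \<otimes>\<^bsub>G\<^esub> inv\<^bsub>G\<^esub> a \<otimes>\<^bsub>G\<^esub> inv\<^bsub>G\<^esub> b) \<in> F"
      using Fn.m_closed a by blast
    thus ?thesis using ac b by (simp add: G.m_assoc)
  qed
  define S where "S = {a \<otimes>\<^bsub>G\<^esub> b \<otimes>\<^bsub>G\<^esub> inv\<^bsub>G\<^esub> a \<otimes>\<^bsub>G\<^esub> inv\<^bsub>G\<^esub> b | a b. a \<in> F \<and> b \<in> carrier G}"
  define C where "C = generate G S"
  have SF: "S \<subseteq> F" unfolding S_def using comm_in_F by blast
  have SG: "S \<subseteq> carrier G" using SF Fcar by blast
  have CF: "C \<subseteq> F" unfolding C_def by (rule G.generate_subgroup_incl[OF SF Fsg])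
  have Csg: "subgroup C G" unfolding C_def by (rule G.generate_is_subgroup[OF SG])
  have SC: "S \<subseteq> C" unfolding C_def by (rule subsetI, erule generate.incl)
  have CnG: "C \<lhd> G" unfolding C_def
  proof (rule G.normal_generateI[OF SG])
    fix h g assume "h \<in> S" and g: "g \<in> carrier G"
    then obtain a b where ab: "a \<in> F" "b \<in> carrier G"
      "h = a \<otimes>\<^bsub>G\<^esub> b \<otimes>\<^bsub>G\<^esub> inv\<^bsub>G\<^esub> a \<otimes>\<^bsub>G\<^esub> inv\<^bsub>G\<^esub> b"
      unfolding S_def by auto
    have ac: "a \<in> carrier G" using ab Fcar by auto
    have cancel1: "inv\<^bsub>G\<^esub> g \<otimes>\<^bsub>G\<^esub> (g \<otimes>\<^bsub>G\<^esub> y) = y" if "y \<in> carrier G" for y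
      using that g by (simp add: G.m_assoc[symmetric])
    let ?a = "g \<otimes>\<^bsub>G\<^esub> a \<otimes>\<^bsub>G\<^esub> inv\<^bsub>G\<^esub> g" and ?b = "g \<otimes>\<^bsub>G\<^esub> b \<otimes>\<^bsub>G\<^esub> inv\<^bsub>G\<^esub> g"
    have "g \<otimes>\<^bsub>G\<^esub> h \<otimes>\<^bsub>G\<^esub> inv\<^bsub>G\<^esub> g = ?a \<otimes>\<^bsub>G\<^esub> ?b \<otimes>\<^bsub>G\<^esub> inv\<^bsub>G\<^esub> ?a \<otimes>\<^bsub>G\<^esub> inv\<^bsub>G\<^esub> ?b"
      using ab(2) ac g unfolding ab(3) by (simp add: G.m_assoc G.inv_mult_group cancel1)
    moreover have "?a \<in> F" using Fn.inv_op_closed2[OF g ab(1)] .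
    moreover have "?b \<in> carrier G" using g ab(2) by simp
    ultimately show "g \<otimes>\<^bsub>G\<^esub> h \<otimes>\<^bsub>G\<^esub> inv\<^bsub>G\<^esub> g \<in> S" unfolding S_def by blast
  qed
  have CnFG: "C \<lhd> FG" unfolding FG_def using G.normal_restrict_supergroup[OF Fsg CnG CF] .
  interpret FGg: group FG by fact
  interpret CN: normal C FG by fact
  have DC: "derived G F \<subseteq> C" unfolding derived_def
    by (rule G.generate_subgroup_incl[OF _ Csg]) (use SC Fcar in \<open>auto simp: S_def\<close>)
  define Q where "Q = FG Mod C"
  have commQ: "comm_group Q" unfolding Q_def
  proof (rule FGg.quot_comm[OF CnFG])
    fix a b assume "a \<in> carrier FG" "b \<in> carrier FG"
    then show "a \<otimes>\<^bsub>FG\<^esub> b \<otimes>\<^bsub>FG\<^esub> inv\<^bsub>FG\<^esub> a \<otimes>\<^bsub>FG\<^esub> inv\<^bsub>FG\<^esub> b \<in> C"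
      using SC Fcar unfolding S_def by auto
  qed
  interpret Qc: comm_group Q by fact
  define pi where "pi a = C #>\<^bsub>FG\<^esub> a" for a
  have pihom: "pi \<in> hom FG Q" unfolding pi_def Q_def using CN.r_coset_hom_Mod .
  have pic: "pi a \<in> carrier Q" if "a \<in> F" for a using pihom that unfolding hom_def by auto
  have E1: "pi a = pi b" if "a \<in> F" "b \<in> F" "a \<otimes>\<^bsub>G\<^esub> inv\<^bsub>G\<^esub> b \<in> C" for a b
  proof -
    have "a \<in> C #>\<^bsub>FG\<^esub> b" using CN.rcos_module_rev[OF gFG, of b a] that by simp
    then show ?thesis unfolding pi_def using FGg.repr_independence[of a C b] that CN.subgroup_axioms by simp
  qed
  have E2: "a \<in> C" if "a \<in> F" "pi a = \<one>\<^bsub>Q\<^esub>" for a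
  proof -
    have "a \<in> C #>\<^bsub>FG\<^esub> a" using FGg.rcos_self[of a C] that CN.subgroup_axioms by simp
    then show ?thesis using that unfolding pi_def Q_def by simp
  qed
  have phihom: "\<phi> \<in> hom FG FG" using as(4) unfolding FG_def iso_def by auto
  have phiF: "\<phi> f \<in> F" if "f \<in> F" for f using phihom that unfolding hom_def by auto
  have phigh: "group_hom FG FG \<phi>"
    by (rule group_hom.intro[OF gFG gFG]) (simp add: group_hom_axioms_def phihom)
  have K1: "pi (\<phi> f) = pi f" if f: "f \<in> F" for f
  proof -
    have fc: "f \<in> carrier G" using f Fcar by auto
    have fi: "inv\<^bsub>G\<^esub> f \<in> F" using f by simp
    have "\<phi> (inv\<^bsub>G\<^esub> f) = inv\<^bsub>G\<^esub> (\<phi> f)"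
      using group_hom.hom_inv[OF phigh, of f] f phiF[OF f] by simp
    moreover have "t \<otimes>\<^bsub>G\<^esub> inv\<^bsub>G\<^esub> f \<otimes>\<^bsub>G\<^esub> inv\<^bsub>G\<^esub> t = \<phi> (inv\<^bsub>G\<^esub> f)" using as(10) fi by blast
    moreover have "f \<otimes>\<^bsub>G\<^esub> t \<otimes>\<^bsub>G\<^esub> inv\<^bsub>G\<^esub> f \<otimes>\<^bsub>G\<^esub> inv\<^bsub>G\<^esub> t \<in> C"
      using SC f as(6) unfolding S_def by blast
    ultimately have "f \<otimes>\<^bsub>G\<^esub> inv\<^bsub>G\<^esub> (\<phi> f) \<in> C" using fc as(6) by (simp add: G.m_assoc)
    then show ?thesis using E1[OF f phiF[OF f]] by simp
  qed
  have mono: "basis_monomial G n x v \<in> F \<and>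
      pi (basis_monomial G n x v) = finprod Q (\<lambda>i. pi (x i) [^]\<^bsub>Q\<^esub> v i) {..<n}" for v
  proof -
    have "foldr (\<lambda>i acc. (x i [^]\<^bsub>G\<^esub> v i) \<otimes>\<^bsub>G\<^esub> acc) [0..<n] \<one>\<^bsub>G\<^esub> \<in> F \<and>
         pi (foldr (\<lambda>i acc. (x i [^]\<^bsub>G\<^esub> v i) \<otimes>\<^bsub>G\<^esub> acc) [0..<n] \<one>\<^bsub>G\<^esub>) =
           finprod Q (\<lambda>i. pi (x i) [^]\<^bsub>Q\<^esub> v i) (set [0..<n])"
      by (rule foldr_hom_finprod[OF as(1) Fsg commQ]) (use pihom fb(2) in \<open>auto simp: FG_def\<close>)
    then show ?thesis unfolding basis_monomial_def by (simp add: atLeast0LessThan)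
  qed
  have K2: "pi (\<phi> (x j)) = pi (basis_monomial G n x (\<lambda>i. A $$ (i, j)))" if j: "j < n" for j
  proof -
    have "\<phi> (x j) \<otimes>\<^bsub>G\<^esub> inv\<^bsub>G\<^esub> (basis_monomial G n x (\<lambda>i. A $$ (i, j))) \<in> derived G F"
      using as(11) j unfolding abelianization_matrix_def by blast
    then show ?thesis using E1 DC phiF fb(2) j mono by blast
  qed
  have Acar: "A \<in> carrier_mat n n" using as(11) unfolding abelianization_matrix_def by blast
  obtain B where B: "\<forall>i<n. \<forall>k<n. (\<Sum>j<n. (A$$(i,j) - (if i=j then 1 else 0)) * B j k) = (if i=k then 1 else 0)"
    using inv_mat_entries[OF as(12) Acar] by blast
  have xC: "x k \<in> C" if k: "k < n" for k
  proof -
    have "pi (x k) = \<one>\<^bsub>Q\<^esub>"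
    proof (rule Qc.key_lin[where y = "\<lambda>i. pi (x i)" and A = "\<lambda>i j. A $$ (i, j)" and B = B])
      show "\<And>i. i < n \<Longrightarrow> pi (x i) \<in> carrier Q" using pic fb(2) by blast
      show "(\<Otimes>\<^bsub>Q\<^esub>i\<in>{..<n}. pi (x i) [^]\<^bsub>Q\<^esub> A $$ (i, j)) = pi (x j)" if "j < n" for j
        using mono[of "\<lambda>i. A $$ (i, j)"] K2[OF that] K1[of "x j"] fb(2) that by simp
      show "\<And>i k. i < n \<Longrightarrow> k < n \<Longrightarrow>
        (\<Sum>j<n. (A $$ (i, j) - (if i = j then 1 else 0)) * B j k) = (if i = k then 1 else 0)"
        using B by blast
    qed (rule k)
    then show ?thesis using E2 fb(2) k by blast
  qed
  have FC: "F \<subseteq> C" using G.generate_subgroup_incl[OF _ Csg, of "x ` {..<n}"] xC fb(3) by auto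
  have Flcs: "F \<subseteq> lcs G i" for i
  proof (induction i)
    case 0 then show ?case using Fcar by simp
  next
    case (Suc i)
    have "S \<subseteq> {a \<otimes>\<^bsub>G\<^esub> b \<otimes>\<^bsub>G\<^esub> inv\<^bsub>G\<^esub> a \<otimes>\<^bsub>G\<^esub> inv\<^bsub>G\<^esub> b | a b. a \<in> lcs G i \<and> b \<in> carrier G}"
      using Suc unfolding S_def by blast
    then have "C \<subseteq> lcs G (Suc i)" unfolding C_def by (simp add: G.mono_generate)
    then show ?case using FC by blast
  qed
  have commG: "a \<otimes>\<^bsub>G\<^esub> b \<otimes>\<^bsub>G\<^esub> inv\<^bsub>G\<^esub> a \<otimes>\<^bsub>G\<^esub> inv\<^bsub>G\<^esub> b \<in> F"
    if a: "a \<in> carrier G" and b: "b \<in> carrier G" for a b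
  proof -
    obtain f k where fk: "f \<in> F" "a = f \<otimes>\<^bsub>G\<^esub> t [^]\<^bsub>G\<^esub> (k::int)" using a as(9) by blast
    obtain g m where gm: "g \<in> F" "b = g \<otimes>\<^bsub>G\<^esub> t [^]\<^bsub>G\<^esub> (m::int)" using b as(9) by blast
    have fc: "f \<in> carrier G" and gc: "g \<in> carrier G" using fk gm Fcar by auto
    have tc: "t \<in> carrier G" by fact
    have eq: "a \<otimes>\<^bsub>G\<^esub> b \<otimes>\<^bsub>G\<^esub> inv\<^bsub>G\<^esub> a \<otimes>\<^bsub>G\<^esub> inv\<^bsub>G\<^esub> b =
      f \<otimes>\<^bsub>G\<^esub> (t [^]\<^bsub>G\<^esub> k \<otimes>\<^bsub>G\<^esub> g \<otimes>\<^bsub>G\<^esub> inv\<^bsub>G\<^esub> (t [^]\<^bsub>G\<^esub> k))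
        \<otimes>\<^bsub>G\<^esub> (t [^]\<^bsub>G\<^esub> m \<otimes>\<^bsub>G\<^esub> inv\<^bsub>G\<^esub> f \<otimes>\<^bsub>G\<^esub> inv\<^bsub>G\<^esub> (t [^]\<^bsub>G\<^esub> m)) \<otimes>\<^bsub>G\<^esub> inv\<^bsub>G\<^esub> g"
    proof -
      have sw: "t [^]\<^bsub>G\<^esub> m \<otimes>\<^bsub>G\<^esub> (t [^]\<^bsub>G\<^esub> (-k) \<otimes>\<^bsub>G\<^esub> y) =
                t [^]\<^bsub>G\<^esub> (-k) \<otimes>\<^bsub>G\<^esub> (t [^]\<^bsub>G\<^esub> m \<otimes>\<^bsub>G\<^esub> y)" if "y \<in> carrier G" for y
      proof -
        have "t [^]\<^bsub>G\<^esub> m \<otimes>\<^bsub>G\<^esub> t [^]\<^bsub>G\<^esub> (-k) = t [^]\<^bsub>G\<^esub> (-k) \<otimes>\<^bsub>G\<^esub> t [^]\<^bsub>G\<^esub> m"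
          using tc by (simp add: G.int_pow_mult[symmetric] add.commute)
        then show ?thesis using that tc by (simp add: G.m_assoc[symmetric])
      qed
      show ?thesis unfolding fk(2) gm(2) using fc gc tc
        by (simp add: G.m_assoc G.inv_mult_group G.int_pow_neg[symmetric] sw)
    qed
    have "t [^]\<^bsub>G\<^esub> k \<otimes>\<^bsub>G\<^esub> g \<otimes>\<^bsub>G\<^esub> inv\<^bsub>G\<^esub> (t [^]\<^bsub>G\<^esub> k) \<in> F"
      using Fn.inv_op_closed2[OF _ gm(1)] tc by simp
    moreover have "t [^]\<^bsub>G\<^esub> m \<otimes>\<^bsub>G\<^esub> inv\<^bsub>G\<^esub> f \<otimes>\<^bsub>G\<^esub> inv\<^bsub>G\<^esub> (t [^]\<^bsub>G\<^esub> m) \<in> F"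
      using Fn.inv_op_closed2[OF _ Fn.m_inv_closed[OF fk(1)]] tc by simp
    ultimately show ?thesis unfolding eq using fk(1) gm(1) by (simp add: Fn.m_closed)
  qed
  have cs: "{a \<otimes>\<^bsub>G\<^esub> b \<otimes>\<^bsub>G\<^esub> inv\<^bsub>G\<^esub> a \<otimes>\<^bsub>G\<^esub> inv\<^bsub>G\<^esub> b | a b. a \<in> lcs G 0 \<and> b \<in> carrier G} \<subseteq> F"
    using commG by auto
  have lcs1: "lcs G 1 \<subseteq> F"
    unfolding One_nat_def lcs.simps(2) by (rule G.generate_subgroup_incl[OF cs Fsg])
  have inter: "(\<Inter>i. lcs G i) = F"
  proof
    show "(\<Inter>i. lcs G i) \<subseteq> F" using lcs1 by blast
    show "F \<subseteq> (\<Inter>i. lcs G i)" using Flcs by blast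
  qed
  have x0: "x 0 \<in> F" using fb(2) as(2) by auto
  have "word_eval G x [(0, True)] \<noteq> \<one>\<^bsub>G\<^esub>" using fb(4) as(2) by auto
  then have "x 0 \<noteq> \<one>\<^bsub>G\<^esub>" using x0 Fcar by (auto simp: word_eval_def)
  then have "F \<noteq> {\<one>\<^bsub>G\<^esub>}" using x0 by blast
  then show ?thesis using inter unfolding residually_nilpotent_def by simp
qed

end
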